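(* Let $G\cong K_s\,\square\,K_2$ with $s\ge3$. Then $q(G)=2$, and $G$ has a matrix realization $A\in S(G)$ with exactly two distinct eigenvalues that has the Strong Spectral Property.
   Context: $K_s\square K_2$ is the Cartesian product: vertex set $V(K_s)\times V(K_2)$, with $(g_1,h_1)\sim(g_2,h_2)$ iff ($g_1=g_2$ and $h_1h_2$ an edge) or ($g_1g_2$ an edge and $h_1=h_2$). For a graph $G$ on $n$ vertices, $S(G)$ is the set of real symmetric $n\times n$ matrices $A$ with $a_{ij}\ne0$ ($i\ne j$) iff $ij\in E(G)$ (diagonal unrestricted), and $q(G)$ is the minimum number of distinct eigenvalues of a matrix in $S(G)$. A symmetric matrix $A$ has the Strong Spectral Property (SSP) if the only symmetric matrix $X$ with $A\circ X=O$, $I\circ X=O$ and $AX-XA=O$ is $X=O$ ($\circ$ the entrywise product). *)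

theory Defs
  imports "Jordan_Normal_Form.Char_Poly"
begin

text \<open>Simple graphs on vertex set {0..<n}, given by a symmetric irreflexive
  edge predicate E.\<close>

text \<open>K_s box K_2 on 2s vertices: vertex v < 2s encodes the pair (v mod s, v div s),
  with v mod s a vertex of K_s and v div s in {0,1} a vertex of K_2.\<close>
definition KsK2 :: "nat \<Rightarrow> nat \<Rightarrow> nat \<Rightarrow> bool" where
  "KsK2 s v w \<longleftrightarrow>
     (v mod s = w mod s \<and> v div s \<noteq> w div s) \<or>
     (v mod s \<noteq> w mod s \<and> v div s = w div s)"

definition S_graph :: "nat \<Rightarrow> (nat \<Rightarrow> nat \<Rightarrow> bool) \<Rightarrow> real mat set" where
  "S_graph n E = {A. A \<in> carrier_mat n n \<and> transpose_mat A = A \<and>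
     (\<forall>i<n. \<forall>j<n. i \<noteq> j \<longrightarrow> (A $$ (i,j) \<noteq> 0 \<longleftrightarrow> E i j))}"

definition num_distinct_eigs :: "real mat \<Rightarrow> nat" where
  "num_distinct_eigs A = card {e. eigenvalue A e}"

definition q_graph :: "nat \<Rightarrow> (nat \<Rightarrow> nat \<Rightarrow> bool) \<Rightarrow> nat" where
  "q_graph n E = (LEAST k. \<exists>A \<in> S_graph n E. num_distinct_eigs A = k)"

definition SSP :: "real mat \<Rightarrow> bool" where
  "SSP A \<longleftrightarrow> (\<forall>X \<in> carrier_mat (dim_row A) (dim_row A).
     (transpose_mat X = X \<and>
      (\<forall>i<dim_row A. \<forall>j<dim_row A. A $$ (i,j) * X $$ (i,j) = 0) \<and>
      (\<forall>i<dim_row A. X $$ (i,i) = 0) \<and>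
      A * X - X * A = 0\<^sub>m (dim_row A) (dim_row A))
     \<longrightarrow> X = 0\<^sub>m (dim_row A) (dim_row A))"

end

theory Submission
  imports Defs "Jordan_Normal_Form.Schur_Decomposition" "Jordan_Normal_Form.Spectral_Radius"
begin


definition trm :: "'a::comm_ring_1 mat \<Rightarrow> 'a" where
  "trm M = (\<Sum>i = 0..<dim_row M. M $$ (i,i))"

lemma mult_entry:
  assumes "X \<in> carrier_mat n m" "Y \<in> carrier_mat m p" "i < n" "j < p"
  shows "(X * Y) $$ (i,j) = (\<Sum>k = 0..<m. X $$ (i,k) * Y $$ (k,j))"
  using assms by (simp add: scalar_prod_def)


lemma trm_mult_comm:
  fixes X Y :: "'a::comm_ring_1 mat"
  assumes X: "X \<in> carrier_mat n m" and Y: "Y \<in> carrier_mat m n"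
  shows "trm (X * Y) = trm (Y * X)"
proof -
  have "trm (X * Y) = (\<Sum>i = 0..<n. (X * Y) $$ (i,i))" using X by (simp add: trm_def)
  also have "\<dots> = (\<Sum>i = 0..<n. \<Sum>k = 0..<m. X $$ (i,k) * Y $$ (k,i))"
    by (intro sum.cong refl) (simp add: mult_entry[OF X Y])
  also have "\<dots> = (\<Sum>k = 0..<m. \<Sum>i = 0..<n. Y $$ (k,i) * X $$ (i,k))"
    by (subst sum.swap) (simp only: mult.commute)
  also have "\<dots> = (\<Sum>k = 0..<m. (Y * X) $$ (k,k))"
    by (intro sum.cong refl) (simp add: mult_entry[OF Y X])
  also have "\<dots> = trm (Y * X)" using Y by (simp add: trm_def)
  finally show ?thesis .
qed

lemma trm_sim:
  fixes A B :: "'a::comm_ring_1 mat"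
  assumes sim: "similar_mat_wit A B P Q"
  shows "trm A = trm B"
proof -
  define n where "n = dim_row A"
  note D = similar_mat_witD[OF n_def sim]
  have "trm A = trm ((P * B) * Q)" by (subst D(3)) (rule refl)
  also have "\<dots> = trm (Q * (P * B))"
    by (rule trm_mult_comm[of _ n n]) (use D in auto)
  also have "Q * (P * B) = (Q * P) * B" by (rule assoc_mult_mat[symmetric]) (use D in auto)
  also have "\<dots> = B" unfolding D(2) using D(5) by (rule left_mult_one_mat)
  finally show ?thesis .
qed
lemma herm_real:
  fixes A :: "real mat"
  assumes A: "A \<in> carrier_mat n n" and sym: "transpose_mat A = A"
    and ev: "eigenvalue (map_mat complex_of_real A) a"
  shows "Im a = 0"
proof -
  let ?C = "map_mat complex_of_real A"
  from ev obtain v where v: "v \<in> carrier_vec n" "v \<noteq> 0\<^sub>v n" "?C *\<^sub>v v = a \<cdot>\<^sub>v v"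
    unfolding eigenvalue_def eigenvector_def using A by auto
  have symij: "A $$ (i,j) = A $$ (j,i)" if "i < n" "j < n" for i j
  proof -
    have "A $$ (j,i) = transpose_mat A $$ (i,j)" using that A by simp
    thus ?thesis using sym by simp
  qed
  have eq: "(\<Sum>j = 0..<n. of_real (A $$ (i,j)) * v $ j) = a * v $ i" if "i < n" for i
  proof -
    have "(?C *\<^sub>v v) $ i = a * v $ i" using v that by simp
    moreover have "(?C *\<^sub>v v) $ i = row ?C i \<bullet> v" using that A by simp
    moreover have "row ?C i \<bullet> v = (\<Sum>j = 0..<n. of_real (A $$ (i,j)) * v $ j)"
      using that A v by (simp add: scalar_prod_def)
    ultimately show ?thesis by simp
  qed
  define S where "S = (\<Sum>i = 0..<n. cnj (v $ i) * (\<Sum>j = 0..<n. of_real (A $$ (i,j)) * v $ j))"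
  define N where "N = (\<Sum>i = 0..<n. cnj (v $ i) * v $ i)"
  have "S = (\<Sum>i = 0..<n. cnj (v $ i) * (a * v $ i))" unfolding S_def
    by (intro sum.cong refl) (simp add: eq)
  also have "\<dots> = a * N" unfolding N_def sum_distrib_left
    by (intro sum.cong refl) (simp only: mult.left_commute)
  finally have S1: "S = a * N" .
  have "cnj S = (\<Sum>i = 0..<n. v $ i * (\<Sum>j = 0..<n. of_real (A $$ (i,j)) * cnj (v $ j)))"
    unfolding S_def by simp
  also have "\<dots> = (\<Sum>i = 0..<n. \<Sum>j = 0..<n. v $ i * of_real (A $$ (i,j)) * cnj (v $ j))"
    by (simp only: sum_distrib_left mult.assoc)
  also have "\<dots> = (\<Sum>j = 0..<n. \<Sum>i = 0..<n. v $ i * of_real (A $$ (i,j)) * cnj (v $ j))"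
    by (rule sum.swap)
  also have "\<dots> = (\<Sum>j = 0..<n. \<Sum>i = 0..<n. cnj (v $ j) * (of_real (A $$ (j,i)) * v $ i))"
  proof (intro sum.cong refl)
    fix j i assume "j \<in> {0..<n}" "i \<in> {0..<n}"
    hence "A $$ (i,j) = A $$ (j,i)" using symij by auto
    thus "v $ i * of_real (A $$ (i,j)) * cnj (v $ j) = cnj (v $ j) * (of_real (A $$ (j,i)) * v $ i)"
      by (simp only: mult.commute mult.left_commute)
  qed
  also have "\<dots> = S" unfolding S_def by (simp only: sum_distrib_left)
  finally have S2: "cnj S = S" .
  have Nr: "N = of_real (\<Sum>i = 0..<n. (cmod (v $ i))^2)"
    unfolding N_def of_real_sum complex_norm_square by (simp only: mult.commute)
  obtain i where i: "i < n" "v $ i \<noteq> 0"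
  proof (rule ccontr)
    assume "\<not> thesis"
    with that have "\<forall>i<n. v $ i = 0" by blast
    hence "v = 0\<^sub>v n" using v(1) by (intro eq_vecI) auto
    with v(2) show False by simp
  qed
  have pos: "(\<Sum>i = 0..<n. (cmod (v $ i))^2) > 0"
  proof -
    have "(cmod (v $ i))^2 \<le> (\<Sum>i = 0..<n. (cmod (v $ i))^2)"
      using i by (intro member_le_sum) auto
    moreover have "(cmod (v $ i))^2 > 0" using i by simp
    ultimately show ?thesis by linarith
  qed
  have "(\<Sum>i = 0..<n. (cmod (v $ i))^2) \<noteq> 0" using pos by linarith
  hence N0: "N \<noteq> 0" unfolding Nr of_real_eq_0_iff .
  have cN: "cnj N = N" unfolding Nr by (rule complex_cnj_complex_of_real)
  have "cnj a * N = cnj (a * N)" using cN by simp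
  also have "\<dots> = a * N" using S1 S2 by simp
  finally have "cnj a = a" using N0 by simp
  hence "Im (cnj a) = Im a" by simp
  thus ?thesis by simp
qed



lemma pow2_mat: "M \<in> carrier_mat n n \<Longrightarrow> M ^\<^sub>m 2 = M * M"
  by (simp add: numeral_2_eq_2)

lemma trm_map_real:
  fixes M :: "real mat"
  assumes "M \<in> carrier_mat n n"
  shows "trm (map_mat complex_of_real M) = of_real (trm M)"
  unfolding trm_def of_real_sum using assms by (intro sum.cong) auto

lemma ut_sq_diag:
  fixes B :: "'a::comm_ring_1 mat"
  assumes B: "B \<in> carrier_mat n n" and ut: "upper_triangular B" and k: "k < n"
  shows "(B * B) $$ (k,k) = B $$ (k,k) * B $$ (k,k)"
proof -
  have "(B * B) $$ (k,k) = (\<Sum>l = 0..<n. B $$ (k,l) * B $$ (l,k))"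
    by (rule mult_entry[OF B B k k])
  also have "\<dots> = B $$ (k,k) * B $$ (k,k) + (\<Sum>l \<in> {0..<n} - {k}. B $$ (k,l) * B $$ (l,k))"
    using k by (subst sum.remove[of _ k]) auto
  also have "(\<Sum>l \<in> {0..<n} - {k}. B $$ (k,l) * B $$ (l,k)) = 0"
  proof (rule sum.neutral, rule ballI)
    fix l assume l: "l \<in> {0..<n} - {k}"
    show "B $$ (k,l) * B $$ (l,k) = 0"
    proof (cases "l < k")
      case True
      hence "B $$ (k,l) = 0" using ut k B unfolding upper_triangular_def by auto
      thus ?thesis by simp
    next
      case False
      hence "k < l" using l by auto
      hence "B $$ (l,k) = 0" using ut l B unfolding upper_triangular_def by auto
      thus ?thesis by simp
    qed
  qed
  finally show ?thesis by simp
qed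


lemma two_eigs:
  fixes A :: "real mat"
  assumes A: "A \<in> carrier_mat n n" and sym: "transpose_mat A = A"
    and ij: "i < n" "j < n" "i \<noteq> j" "A $$ (i,j) \<noteq> 0"
  shows "card {e. eigenvalue A e} \<ge> 2"
proof (rule ccontr)
  assume "\<not> ?thesis"
  hence card1: "card {e. eigenvalue A e} \<le> Suc 0" by simp
  have fin: "finite {e. eigenvalue A e}"
    using card_finite_spectrum(1)[OF A] unfolding spectrum_def .
  let ?C = "map_mat complex_of_real A"
  have C: "?C \<in> carrier_mat n n" using A by simp
  obtain as where as: "char_poly ?C = (\<Prod>a\<leftarrow>as. [:-a,1:])" "length as = n"
    using char_poly_factorized[OF C] by blast
  obtain B P Q where sch: "schur_decomposition ?C as = (B,P,Q)"
    by (cases "schur_decomposition ?C as") auto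
  from schur_decomposition[OF C as(1) sch]
  have sim: "similar_mat_wit ?C B P Q" and ut: "upper_triangular B" and dg: "diag_mat B = as"
    by auto
  have nC: "n = dim_row ?C" using C by simp
  note D = similar_mat_witD[OF nC sim]
  have realroot: "Im a = 0 \<and> eigenvalue A (Re a)" if a: "a \<in> set as" for a
  proof -
    have root: "poly (char_poly ?C) a = 0" unfolding as(1) poly_prod_list prod_list_zero_iff
      using a by force
    hence evC: "eigenvalue ?C a" using eigenvalue_root_char_poly[OF C] by simp
    hence im: "Im a = 0" by (rule herm_real[OF A sym])
    hence aeq: "of_real (Re a) = a" by (simp add: complex_eq_iff)
    have "of_real (poly (char_poly A) (Re a)) = poly (char_poly ?C) (of_real (Re a))"
      unfolding of_real_hom.char_poly_hom[OF A] of_real_hom.poly_map_poly ..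
    also have "\<dots> = 0" unfolding aeq by (rule root)
    finally have "poly (char_poly A) (Re a) = 0" by simp
    thus ?thesis using eigenvalue_root_char_poly[OF A] im by simp
  qed
  have n2: "n \<ge> 2" using ij by auto
  define lam where "lam = Re (as ! 0)"
  have a0: "as ! 0 \<in> set as" using as(2) n2 by auto
  have all: "a = of_real lam" if a: "a \<in> set as" for a
  proof -
    have "Re a = lam"
      using card1 fin realroot[OF a] realroot[OF a0] unfolding lam_def card_le_Suc0_iff_eq[OF fin]
      by blast
    moreover have "Im a = 0" using realroot[OF a] by simp
    ultimately show ?thesis by (simp add: complex_eq_iff)
  qed
  have dB: "B $$ (k,k) = of_real lam" if k: "k < n" for k
  proof -
    have "B $$ (k,k) = as ! k" using dg[symmetric] k D(5) by (simp add: diag_mat_def)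
    also have "\<dots> = of_real lam" using all k as(2) by simp
    finally show ?thesis .
  qed
  have "trm ?C = trm B" by (rule trm_sim[OF sim])
  also have "\<dots> = (\<Sum>k = 0..<n. of_real lam)" unfolding trm_def using D(5) dB by simp
  also have "\<dots> = of_real (real n * lam)" by simp
  finally have t1: "trm A = real n * lam" unfolding trm_map_real[OF A] of_real_eq_iff .
  have "trm (?C ^\<^sub>m 2) = trm (B ^\<^sub>m 2)" by (rule trm_sim[OF similar_mat_wit_pow[OF sim]])
  also have "B ^\<^sub>m 2 = B * B" by (rule pow2_mat[OF D(5)])
  also have "trm (B * B) = (\<Sum>k = 0..<n. of_real lam * of_real lam)"
    unfolding trm_def using D(5) dB ut_sq_diag[OF D(5) ut] by simp
  also have "\<dots> = of_real (real n * lam^2)" by (simp add: power2_eq_square)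
  finally have c2: "trm (?C * ?C) = of_real (real n * lam^2)" unfolding pow2_mat[OF C] .
  have mm: "?C * ?C = map_mat complex_of_real (A * A)"
    by (rule of_real_hom.mat_hom_mult[OF A A, symmetric])
  from c2 have "of_real (trm (A * A)) = (of_real (real n * lam^2) :: complex)"
    unfolding mm trm_map_real[OF mult_carrier_mat[OF A A]] .
  hence t2: "trm (A * A) = real n * lam^2" by (simp only: of_real_eq_iff)
  have symij: "A $$ (k,l) = A $$ (l,k)" if "k < n" "l < n" for k l
  proof -
    have "A $$ (l,k) = transpose_mat A $$ (k,l)" using that A by simp
    thus ?thesis using sym by simp
  qed
  have t2': "trm (A * A) = (\<Sum>k = 0..<n. \<Sum>l = 0..<n. (A $$ (k,l))^2)"
  proof -
    have "trm (A * A) = (\<Sum>k = 0..<n. (A * A) $$ (k,k))" using A by (simp add: trm_def)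
    also have "\<dots> = (\<Sum>k = 0..<n. \<Sum>l = 0..<n. A $$ (k,l) * A $$ (l,k))"
      by (intro sum.cong refl) (simp add: mult_entry[OF A A])
    also have "\<dots> = (\<Sum>k = 0..<n. \<Sum>l = 0..<n. (A $$ (k,l))^2)"
    proof (intro sum.cong refl)
      fix k l assume "k \<in> {0..<n}" "l \<in> {0..<n}"
      hence "A $$ (l,k) = A $$ (k,l)" using symij by auto
      thus "A $$ (k,l) * A $$ (l,k) = (A $$ (k,l))^2" by (simp add: power2_eq_square)
    qed
    finally show ?thesis .
  qed
  have t1': "trm A = (\<Sum>k = 0..<n. A $$ (k,k))" unfolding trm_def using A by simp
  have "0 \<le> (\<Sum>k = 0..<n. (A $$ (k,k) - lam)^2)" by (intro sum_nonneg) auto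
  also have "\<dots> = (\<Sum>k = 0..<n. (A $$ (k,k))^2) - 2 * lam * (\<Sum>k = 0..<n. A $$ (k,k)) + real n * lam^2"
    by (simp add: power2_diff sum.distrib sum_subtractf sum_distrib_left mult.assoc mult.commute)
  finally have ge: "(\<Sum>k = 0..<n. (A $$ (k,k))^2) \<ge> real n * lam^2"
    using t1 t1' by (simp add: power2_eq_square algebra_simps)
  have "(\<Sum>k = 0..<n. (A $$ (k,k))^2) < (\<Sum>k = 0..<n. \<Sum>l = 0..<n. (A $$ (k,l))^2)"
  proof (rule sum_strict_mono_ex1)
    show "finite {0..<n}" by simp
    show "\<forall>k\<in>{0..<n}. (A $$ (k,k))^2 \<le> (\<Sum>l = 0..<n. (A $$ (k,l))^2)"
      by (auto intro!: member_le_sum)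
    have "(A $$ (i,i))^2 + (A $$ (i,j))^2 = (\<Sum>l \<in> {i,j}. (A $$ (i,l))^2)" using ij by simp
    also have "\<dots> \<le> (\<Sum>l = 0..<n. (A $$ (i,l))^2)" using ij by (intro sum_mono2) auto
    finally have "(A $$ (i,i))^2 < (\<Sum>l = 0..<n. (A $$ (i,l))^2)" using ij(4)
      by (smt (verit) zero_less_power2)
    thus "\<exists>k\<in>{0..<n}. (A $$ (k,k))^2 < (\<Sum>l = 0..<n. (A $$ (k,l))^2)" using ij by auto
  qed
  thus False using ge t2 t2' by simp
qed


lemma sum_if_left:
  fixes x y :: real and p s :: nat
  assumes "p < s"
  shows "(\<Sum>k = 0..<s. (if p = k then x else y) * f k) = (x - y) * f p + y * (\<Sum>k = 0..<s. f k)"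
proof -
  have "(\<Sum>k = 0..<s. (if p = k then x else y) * f k)
      = (\<Sum>k = 0..<s. y * f k + (if p = k then (x - y) * f k else 0))"
    by (intro sum.cong) (auto simp: algebra_simps)
  also have "\<dots> = y * (\<Sum>k = 0..<s. f k) + (x - y) * f p"
    unfolding sum.distrib sum_distrib_left[symmetric]
  proof -
    have "(\<Sum>k = 0..<s. if p = k then (x - y) * f k else 0)
      = (if p = p then (x - y) * f p else 0) + (\<Sum>k \<in> {0..<s} - {p}. if p = k then (x - y) * f k else 0)"
      using assms by (subst sum.remove[of _ p]) auto
    also have "(\<Sum>k \<in> {0..<s} - {p}. if p = k then (x - y) * f k else 0) = 0"
      by (intro sum.neutral) auto
    finally show "y * (\<Sum>k = 0..<s. f k) + (\<Sum>k = 0..<s. if p = k then (x - y) * f k else 0) =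
       y * (\<Sum>k = 0..<s. f k) + (x - y) * f p" by simp
  qed
  finally show ?thesis by simp
qed

lemma sum_if_right:
  fixes x y :: real and q s :: nat
  assumes "q < s"
  shows "(\<Sum>k = 0..<s. f k * (if k = q then x else y)) = (x - y) * f q + y * (\<Sum>k = 0..<s. f k)"
proof -
  have "(\<Sum>k = 0..<s. f k * (if k = q then x else y)) = (\<Sum>k = 0..<s. (if q = k then x else y) * f k)"
    by (intro sum.cong) auto
  also have "\<dots> = (x - y) * f q + y * (\<Sum>k = 0..<s. f k)" by (rule sum_if_left[OF assms])
  finally show ?thesis .
qed

lemma sum_ifif:
  fixes x y z w :: real and p q s :: nat
  assumes "p < s" "q < s"
  shows "(\<Sum>k = 0..<s. (if p = k then x else y) * (if k = q then z else w))
     = (x - y) * (if p = q then z else w) + y * ((z - w) + real s * w)"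
proof -
  have "(\<Sum>k = 0..<s. (if k = q then z else w)) = (\<Sum>k = 0..<s. 1 * (if k = q then z else w))" by simp
  also have "\<dots> = (z - w) * 1 + w * real s" using sum_if_right[OF assms(2), of "\<lambda>_. 1"] by simp
  finally have e: "(\<Sum>k = 0..<s. (if k = q then z else w)) = (z - w) + real s * w" by simp
  show ?thesis unfolding sum_if_left[OF assms(1)] e by simp
qed

lemma sum_split2: fixes s :: nat shows "(\<Sum>u = 0..<2*s. g u) = (\<Sum>k = 0..<s. g k) + (\<Sum>k = 0..<s. g (k + s))"
proof -
  have "(\<Sum>u = 0..<2*s. g u) = (\<Sum>u = 0..<s. g u) + (\<Sum>u = s..<2*s. g u)"
    by (rule sum.atLeastLessThan_concat[symmetric]) auto
  also have "(\<Sum>u = s..<2*s. g u) = (\<Sum>u = 0+s..<s+s. g u)" by (simp add: mult_2)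
  also have "\<dots> = (\<Sum>k = 0..<s. g (k + s))" by (rule sum.shift_bounds_nat_ivl)
  finally show ?thesis .
qed

definition bb :: "nat \<Rightarrow> nat \<Rightarrow> nat \<Rightarrow> nat \<Rightarrow> nat \<Rightarrow> real" where
  "bb s h p h' p' = (if h = h' then (if p = p' then (if h = 0 then 2 - real s else real s - 2)
      else (if h = 0 then 2 else -2)) else (if p = p' then 2 else 0))"

definition Am :: "nat \<Rightarrow> real mat" where
  "Am s = mat (2*s) (2*s) (\<lambda>(v,w). bb s (v div s) (v mod s) (w div s) (w mod s))"

lemma Am_carrier: "Am s \<in> carrier_mat (2*s) (2*s)" unfolding Am_def by simp

lemma Am_entry: "v < 2*s \<Longrightarrow> w < 2*s \<Longrightarrow> Am s $$ (v,w) = bb s (v div s) (v mod s) (w div s) (w mod s)"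
  unfolding Am_def by simp

lemma AA_block:
  assumes "h < 2" "h' < 2" "p < s" "q < s"
  shows "(\<Sum>k = 0..<s. bb s h p 0 k * bb s 0 k h' q) + (\<Sum>k = 0..<s. bb s h p 1 k * bb s 1 k h' q)
    = (if h = h' \<and> p = q then real s ^ 2 + 4 else 0)"
proof -
  have h: "h = 0 \<or> h = 1" and h': "h' = 0 \<or> h' = 1" using assms by auto
  note ss = sum_ifif[OF assms(3,4)]
  show ?thesis
    using h h' by (elim disjE; simp add: bb_def ss; simp add: algebra_simps power2_eq_square)
qed


lemma small_divmod:
  fixes k s :: nat
  assumes "k < s"
  shows "k div s = 0" "k mod s = k" "(k + s) div s = 1" "(k + s) mod s = k"
  using assms by auto

lemma eq_by_divmod:
  fixes v w s :: nat
  shows "(v div s = w div s \<and> v mod s = w mod s) \<longleftrightarrow> v = w"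
  by (metis div_mult_mod_eq)

lemma AA_entry:
  assumes s: "s > 0" and v: "v < 2*s" and w: "w < 2*s"
  shows "(Am s * Am s) $$ (v,w) = (if v = w then real s ^ 2 + 4 else 0)"
proof -
  have "(Am s * Am s) $$ (v,w) = (\<Sum>u = 0..<2*s. Am s $$ (v,u) * Am s $$ (u,w))"
    by (rule mult_entry[OF Am_carrier Am_carrier v w])
  also have "\<dots> = (\<Sum>k = 0..<s. Am s $$ (v,k) * Am s $$ (k,w)) + (\<Sum>k = 0..<s. Am s $$ (v,k+s) * Am s $$ (k+s,w))"
    by (rule sum_split2)
  also have "\<dots> = (\<Sum>k = 0..<s. bb s (v div s) (v mod s) 0 k * bb s 0 k (w div s) (w mod s))
      + (\<Sum>k = 0..<s. bb s (v div s) (v mod s) 1 k * bb s 1 k (w div s) (w mod s))"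
    using v w by (intro arg_cong2[where f = "(+)"] sum.cong refl) (auto simp: Am_entry small_divmod)
  also have "\<dots> = (if v div s = w div s \<and> v mod s = w mod s then real s ^ 2 + 4 else 0)"
    using s v w by (intro AA_block) (auto simp: less_mult_imp_div_less)
  also have "\<dots> = (if v = w then real s ^ 2 + 4 else 0)" by (simp only: eq_by_divmod)
  finally show ?thesis .
qed

lemma mult_vec_entry:
  assumes "M \<in> carrier_mat n m" "v \<in> carrier_vec m" "i < n"
  shows "(M *\<^sub>v v) $ i = (\<Sum>j = 0..<m. M $$ (i,j) * v $ j)"
  using assms by (simp add: scalar_prod_def)

lemma eig_sq:
  assumes s: "s > 0" and ev: "eigenvalue (Am s) e"
  shows "e^2 = real s ^ 2 + 4"
proof -
  let ?A = "Am s"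
  from ev obtain v where v: "v \<in> carrier_vec (2*s)" "v \<noteq> 0\<^sub>v (2*s)" "?A *\<^sub>v v = e \<cdot>\<^sub>v v"
    unfolding eigenvalue_def eigenvector_def using Am_carrier[of s] by auto
  obtain i where i: "i < 2*s" "v $ i \<noteq> 0"
  proof (rule ccontr)
    assume "\<not> thesis"
    with that have "\<forall>i<2*s. v $ i = 0" by blast
    hence "v = 0\<^sub>v (2*s)" using v(1) by (intro eq_vecI) auto
    with v(2) show False by simp
  qed
  have "(?A * ?A) *\<^sub>v v = ?A *\<^sub>v (?A *\<^sub>v v)"
    by (rule assoc_mult_mat_vec[OF Am_carrier Am_carrier v(1)])
  also have "\<dots> = e \<cdot>\<^sub>v (e \<cdot>\<^sub>v v)" unfolding v(3) mult_mat_vec[OF Am_carrier v(1)] v(3) ..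
  finally have eq: "((?A * ?A) *\<^sub>v v) $ i = e * (e * v $ i)" using i v(1) by simp
  have "((?A * ?A) *\<^sub>v v) $ i = (\<Sum>j = 0..<2*s. (?A * ?A) $$ (i,j) * v $ j)"
    by (rule mult_vec_entry[OF mult_carrier_mat[OF Am_carrier Am_carrier] v(1) i(1)])
  also have "\<dots> = (\<Sum>j = 0..<2*s. (if i = j then real s ^ 2 + 4 else 0) * v $ j)"
    using s i by (intro sum.cong refl) (simp add: AA_entry)
  also have "\<dots> = (real s ^ 2 + 4) * v $ i" by (simp add: sum_if_left[OF i(1)])
  finally have "e * e * v $ i = (real s ^ 2 + 4) * v $ i" using eq by simp
  thus ?thesis using i(2) by (simp add: power2_eq_square)
qed

lemma eig_exists:
  assumes s: "s \<ge> 3" and r: "r^2 = real s ^ 2 + 4"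
  shows "eigenvalue (Am s) r"
proof -
  let ?A = "Am s"
  define w where "w = vec (2*s) (\<lambda>i. ?A $$ (i,0) + (if i = 0 then r else 0))"
  have wc: "w \<in> carrier_vec (2*s)" unfolding w_def by simp
  have "w $ 1 = ?A $$ (1,0)" using s unfolding w_def by simp
  also have "\<dots> = 2" using s by (simp add: Am_entry bb_def)
  finally have w1: "w $ 1 = 2" .
  have wnz: "w \<noteq> 0\<^sub>v (2*s)"
  proof
    assume "w = 0\<^sub>v (2*s)"
    hence "w $ 1 = 0" using s by simp
    with w1 show False by simp
  qed
  have "?A *\<^sub>v w = r \<cdot>\<^sub>v w"
  proof (rule eq_vecI)
    show "dim_vec (?A *\<^sub>v w) = dim_vec (r \<cdot>\<^sub>v w)" using wc Am_carrier[of s] by simp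
    fix i assume "i < dim_vec (r \<cdot>\<^sub>v w)"
    hence i: "i < 2*s" using wc by simp
    have "(?A *\<^sub>v w) $ i = (\<Sum>u = 0..<2*s. ?A $$ (i,u) * w $ u)"
      using i wc Am_carrier[of s] by (simp add: scalar_prod_def)
    also have "\<dots> = (\<Sum>u = 0..<2*s. ?A $$ (i,u) * ?A $$ (u,0)) + (\<Sum>u = 0..<2*s. ?A $$ (i,u) * (if u = 0 then r else 0))"
      unfolding sum.distrib[symmetric] w_def by (intro sum.cong refl) (simp add: algebra_simps)
    also have "(\<Sum>u = 0..<2*s. ?A $$ (i,u) * ?A $$ (u,0)) = (?A * ?A) $$ (i,0)"
      using s i by (intro mult_entry[symmetric, OF Am_carrier Am_carrier]) auto
    also have "\<dots> = (if i = 0 then real s ^ 2 + 4 else 0)" using s i by (simp add: AA_entry)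
    also have "(\<Sum>u = 0..<2*s. ?A $$ (i,u) * (if u = 0 then r else 0)) = r * ?A $$ (i,0)"
      using s by (subst sum_if_right) auto
    finally have "(?A *\<^sub>v w) $ i = (if i = 0 then r^2 else 0) + r * ?A $$ (i,0)" using r by simp
    also have "\<dots> = (r \<cdot>\<^sub>v w) $ i" using i unfolding w_def by (simp add: algebra_simps power2_eq_square)
    finally show "(?A *\<^sub>v w) $ i = (r \<cdot>\<^sub>v w) $ i" .
  qed
  thus ?thesis unfolding eigenvalue_def eigenvector_def using wc wnz Am_carrier[of s] by auto
qed

lemma eig_set:
  assumes s: "s \<ge> 3"
  shows "card {e. eigenvalue (Am s) e} = 2"
proof -
  define r where "r = sqrt (real s ^ 2 + 4)"
  have r2: "r^2 = real s ^ 2 + 4" unfolding r_def by simp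
  have "0 < real s ^ 2 + 4" by (rule add_nonneg_pos) auto
  hence rp: "r > 0" unfolding r_def by simp
  have iff: "eigenvalue (Am s) e \<longleftrightarrow> e = r \<or> e = -r" for e
  proof
    assume "eigenvalue (Am s) e"
    hence "e^2 = r^2" using eig_sq[of s e] s r2 by simp
    thus "e = r \<or> e = -r" by (simp add: power2_eq_iff)
  next
    assume "e = r \<or> e = -r"
    thus "eigenvalue (Am s) e" using eig_exists[OF s] r2 by auto
  qed
  have "{e. eigenvalue (Am s) e} = {r, -r}" using iff by auto
  thus ?thesis using rp by simp
qed


lemma bb_sym: "bb s h p h' p' = bb s h' p' h p"
  unfolding bb_def by auto

lemma SSP_core:
  fixes X :: "real mat"
  assumes s: "s \<ge> 3" and X: "X \<in> carrier_mat (2*s) (2*s)"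
    and sym: "\<And>v w. v < 2*s \<Longrightarrow> w < 2*s \<Longrightarrow> X $$ (v,w) = X $$ (w,v)"
    and pat: "\<And>v w. v < 2*s \<Longrightarrow> w < 2*s \<Longrightarrow> Am s $$ (v,w) * X $$ (v,w) = 0"
    and dg: "\<And>v. v < 2*s \<Longrightarrow> X $$ (v,v) = 0"
    and comm: "\<And>v w. v < 2*s \<Longrightarrow> w < 2*s \<Longrightarrow> (Am s * X) $$ (v,w) = (X * Am s) $$ (v,w)"
  shows "X = 0\<^sub>m (2*s) (2*s)"
proof -
  let ?A = "Am s"
  have s0: "s > 0" using s by simp
  have pat': "X $$ (v,w) = 0" if "v < 2*s" "w < 2*s" "?A $$ (v,w) \<noteq> 0" for v w
    using pat[OF that(1,2)] that(3) by simp
  have X1: "X $$ (p,q) = 0" if "p < s" "q < s" for p q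
  proof (cases "p = q")
    case True thus ?thesis using dg that by simp
  next
    case False
    hence "?A $$ (p,q) \<noteq> 0" using that by (simp add: Am_entry bb_def)
    thus ?thesis using pat' that by simp
  qed
  have X4: "X $$ (p+s,q+s) = 0" if "p < s" "q < s" for p q
  proof (cases "p = q")
    case True thus ?thesis using dg that by simp
  next
    case False
    hence "?A $$ (p+s,q+s) \<noteq> 0" using that by (simp add: Am_entry bb_def)
    thus ?thesis using pat' that by simp
  qed
  have X2d: "X $$ (p,p+s) = 0" if "p < s" for p
  proof -
    have "?A $$ (p,p+s) \<noteq> 0" using that by (simp add: Am_entry bb_def)
    thus ?thesis using pat' that by simp
  qed
  define Y where "Y p q = X $$ (p, q+s)" for p q
  have X3: "X $$ (p+s,q) = Y q p" if "p < s" "q < s" for p q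
    unfolding Y_def using sym[of "p+s" q] that by simp
  have AXpq: "(?A * X) $$ (p,q+s) = - real s * Y p q + 2 * (\<Sum>k = 0..<s. Y k q)" if pq: "p < s" "q < s" for p q
  proof -
    have "(?A * X) $$ (p,q+s) = (\<Sum>u = 0..<2*s. ?A $$ (p,u) * X $$ (u,q+s))"
      using pq by (intro mult_entry[OF Am_carrier X]) auto
    also have "\<dots> = (\<Sum>k = 0..<s. ?A $$ (p,k) * X $$ (k,q+s)) + (\<Sum>k = 0..<s. ?A $$ (p,k+s) * X $$ (k+s,q+s))"
      by (rule sum_split2)
    also have "(\<Sum>k = 0..<s. ?A $$ (p,k+s) * X $$ (k+s,q+s)) = 0"
      using pq X4 by (intro sum.neutral) auto
    also have "(\<Sum>k = 0..<s. ?A $$ (p,k) * X $$ (k,q+s)) = (\<Sum>k = 0..<s. (if p = k then 2 - real s else 2) * Y k q)"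
      using pq by (intro sum.cong refl) (auto simp: Am_entry bb_def Y_def small_divmod)
    also have "\<dots> = - real s * Y p q + 2 * (\<Sum>k = 0..<s. Y k q)"
      by (subst sum_if_left[OF pq(1)]) simp
    finally show ?thesis by simp
  qed
  have XApq: "(X * ?A) $$ (p,q+s) = real s * Y p q - 2 * (\<Sum>k = 0..<s. Y p k)" if pq: "p < s" "q < s" for p q
  proof -
    have "(X * ?A) $$ (p,q+s) = (\<Sum>u = 0..<2*s. X $$ (p,u) * ?A $$ (u,q+s))"
      using pq by (intro mult_entry[OF X Am_carrier]) auto
    also have "\<dots> = (\<Sum>k = 0..<s. X $$ (p,k) * ?A $$ (k,q+s)) + (\<Sum>k = 0..<s. X $$ (p,k+s) * ?A $$ (k+s,q+s))"
      by (rule sum_split2)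
    also have "(\<Sum>k = 0..<s. X $$ (p,k) * ?A $$ (k,q+s)) = 0"
      using pq X1 by (intro sum.neutral) auto
    also have "(\<Sum>k = 0..<s. X $$ (p,k+s) * ?A $$ (k+s,q+s)) = (\<Sum>k = 0..<s. Y p k * (if k = q then real s - 2 else - 2))"
      using pq by (intro sum.cong refl) (auto simp: Am_entry bb_def Y_def small_divmod)
    also have "\<dots> = real s * Y p q - 2 * (\<Sum>k = 0..<s. Y p k)"
      by (subst sum_if_right[OF pq(2)]) simp
    finally show ?thesis by simp
  qed
  have AXd: "(?A * X) $$ (p,q) = 2 * Y q p" if pq: "p < s" "q < s" for p q
  proof -
    have "(?A * X) $$ (p,q) = (\<Sum>u = 0..<2*s. ?A $$ (p,u) * X $$ (u,q))"
      using pq by (intro mult_entry[OF Am_carrier X]) auto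
    also have "\<dots> = (\<Sum>k = 0..<s. ?A $$ (p,k) * X $$ (k,q)) + (\<Sum>k = 0..<s. ?A $$ (p,k+s) * X $$ (k+s,q))"
      by (rule sum_split2)
    also have "(\<Sum>k = 0..<s. ?A $$ (p,k) * X $$ (k,q)) = 0"
      using pq X1 by (intro sum.neutral) auto
    also have "(\<Sum>k = 0..<s. ?A $$ (p,k+s) * X $$ (k+s,q)) = (\<Sum>k = 0..<s. (if p = k then 2 else 0) * Y q k)"
      using pq X3 by (intro sum.cong refl) (auto simp: Am_entry bb_def small_divmod)
    also have "\<dots> = 2 * Y q p"
      by (subst sum_if_left[OF pq(1)]) simp
    finally show ?thesis by simp
  qed
  have XAd: "(X * ?A) $$ (p,q) = 2 * Y p q" if pq: "p < s" "q < s" for p q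
  proof -
    have "(X * ?A) $$ (p,q) = (\<Sum>u = 0..<2*s. X $$ (p,u) * ?A $$ (u,q))"
      using pq by (intro mult_entry[OF X Am_carrier]) auto
    also have "\<dots> = (\<Sum>k = 0..<s. X $$ (p,k) * ?A $$ (k,q)) + (\<Sum>k = 0..<s. X $$ (p,k+s) * ?A $$ (k+s,q))"
      by (rule sum_split2)
    also have "(\<Sum>k = 0..<s. X $$ (p,k) * ?A $$ (k,q)) = 0"
      using pq X1 by (intro sum.neutral) auto
    also have "(\<Sum>k = 0..<s. X $$ (p,k+s) * ?A $$ (k+s,q)) = (\<Sum>k = 0..<s. Y p k * (if k = q then 2 else 0))"
      using pq by (intro sum.cong refl) (auto simp: Am_entry bb_def Y_def small_divmod)
    also have "\<dots> = 2 * Y p q"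
      by (subst sum_if_right[OF pq(2)]) simp
    finally show ?thesis by simp
  qed
  have Ysym: "Y q p = Y p q" if pq: "p < s" "q < s" for p q
    using comm[of p q] AXd[OF pq] XAd[OF pq] pq by simp
  have rc: "(\<Sum>k = 0..<s. Y p k) = (\<Sum>k = 0..<s. Y k p)" if "p < s" for p
    using that Ysym by (intro sum.cong refl) auto
  have key: "- real s * Y p q + 2 * (\<Sum>k = 0..<s. Y k q) = real s * Y p q - 2 * (\<Sum>k = 0..<s. Y k p)"
    if pq: "p < s" "q < s" for p q
    using comm[of p "q+s"] AXpq[OF pq] XApq[OF pq] rc[OF pq(1)] pq by simp
  have c0: "(\<Sum>k = 0..<s. Y k p) = 0" if p: "p < s" for p
  proof -
    have "Y p p = 0" unfolding Y_def using X2d p by simp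
    thus ?thesis using key[OF p p] by simp
  qed
  have Y0: "Y p q = 0" if pq: "p < s" "q < s" for p q
    using key[OF pq] c0[OF pq(1)] c0[OF pq(2)] s0 by simp
  show ?thesis
  proof (rule eq_matI)
    show "dim_row X = dim_row (0\<^sub>m (2*s) (2*s))" "dim_col X = dim_col (0\<^sub>m (2*s) (2*s))"
      using X by auto
    fix v w assume "v < dim_row (0\<^sub>m (2*s) (2*s))" "w < dim_col (0\<^sub>m (2*s) (2*s))"
    hence v: "v < 2*s" and w: "w < 2*s" by auto
    have "X $$ (v,w) = 0"
    proof (cases "v < s"; cases "w < s")
      assume "v < s" "w < s" thus ?thesis using X1 by simp
    next
      assume "v < s" "\<not> w < s"
      then obtain q where "w = q + s" "q < s" using w by (metis add.commute le_Suc_ex less_diff_conv2 mult_2 not_le diff_add_inverse2 add_diff_inverse_nat)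
      thus ?thesis using Y0[of v q] \<open>v < s\<close> unfolding Y_def by simp
    next
      assume "\<not> v < s" "w < s"
      then obtain p where "v = p + s" "p < s" using v by (metis add.commute le_Suc_ex less_diff_conv2 mult_2 not_le diff_add_inverse2 add_diff_inverse_nat)
      thus ?thesis using Y0[of w p] X3[of p w] \<open>w < s\<close> by simp
    next
      assume "\<not> v < s" "\<not> w < s"
      then obtain p q where "v = p + s" "p < s" "w = q + s" "q < s" using v w
        by (metis add.commute le_Suc_ex less_diff_conv2 mult_2 not_le diff_add_inverse2 add_diff_inverse_nat)
      thus ?thesis using X4 by simp
    qed
    thus "X $$ (v,w) = 0\<^sub>m (2*s) (2*s) $$ (v,w)" using v w by simp
  qed
qed


lemma Am_S:
  assumes s: "s \<ge> 3"
  shows "Am s \<in> S_graph (2*s) (KsK2 s)"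
proof -
  have tr: "transpose_mat (Am s) = Am s"
  proof (rule eq_matI)
    fix v w assume "v < dim_row (Am s)" "w < dim_col (Am s)"
    hence "v < 2*s" "w < 2*s" using Am_carrier[of s] by auto
    thus "transpose_mat (Am s) $$ (v,w) = Am s $$ (v,w)"
      using Am_carrier[of s] by (simp add: Am_entry bb_sym[of s "w div s"])
  qed (use Am_carrier[of s] in auto)
  have off: "Am s $$ (v,w) \<noteq> 0 \<longleftrightarrow> KsK2 s v w" if "v < 2*s" "w < 2*s" "v \<noteq> w" for v w
    using that eq_by_divmod[of v s w] by (auto simp: Am_entry bb_def KsK2_def)
  show ?thesis unfolding S_graph_def using Am_carrier[of s] tr off by auto
qed

lemma Am_SSP:
  assumes s: "s \<ge> 3"
  shows "SSP (Am s)"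
  unfolding SSP_def
proof (intro ballI impI)
  have d: "dim_row (Am s) = 2*s" using Am_carrier[of s] by simp
  fix X :: "real mat" assume X: "X \<in> carrier_mat (dim_row (Am s)) (dim_row (Am s))"
  assume H: "transpose_mat X = X \<and>
      (\<forall>i<dim_row (Am s). \<forall>j<dim_row (Am s). Am s $$ (i,j) * X $$ (i,j) = 0) \<and>
      (\<forall>i<dim_row (Am s). X $$ (i,i) = 0) \<and>
      Am s * X - X * Am s = 0\<^sub>m (dim_row (Am s)) (dim_row (Am s))"
  have Xc: "X \<in> carrier_mat (2*s) (2*s)" using X d by simp
  have sym: "X $$ (v,w) = X $$ (w,v)" if "v < 2*s" "w < 2*s" for v w
  proof -
    have "X $$ (v,w) = transpose_mat X $$ (v,w)" using H by simp
    also have "\<dots> = X $$ (w,v)" using that Xc by simp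
    finally show ?thesis .
  qed
  have comm: "(Am s * X) $$ (v,w) = (X * Am s) $$ (v,w)" if "v < 2*s" "w < 2*s" for v w
  proof -
    have "(Am s * X - X * Am s) $$ (v,w) = 0\<^sub>m (2*s) (2*s) $$ (v,w)" using H d by simp
    hence "(Am s * X) $$ (v,w) - (X * Am s) $$ (v,w) = 0"
      using that Xc Am_carrier[of s] by simp
    thus ?thesis by simp
  qed
  show "X = 0\<^sub>m (dim_row (Am s)) (dim_row (Am s))"
    unfolding d
    by (rule SSP_core[OF s Xc sym _ _ comm]) (use H d in auto)
qed

theorem mainTheorem15:
  fixes s :: nat
  assumes "s \<ge> 3"
  shows "q_graph (2 * s) (KsK2 s) = 2 \<and>
    (\<exists>A \<in> S_graph (2 * s) (KsK2 s). num_distinct_eigs A = 2 \<and> SSP A)"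
proof -
  have ex: "\<exists>A \<in> S_graph (2 * s) (KsK2 s). num_distinct_eigs A = 2 \<and> SSP A"
    using Am_S[OF assms] eig_set[OF assms] Am_SSP[OF assms] unfolding num_distinct_eigs_def by blast
  have lb: "num_distinct_eigs A \<ge> 2" if A: "A \<in> S_graph (2 * s) (KsK2 s)" for A
  proof -
    have c: "A \<in> carrier_mat (2*s) (2*s)" and t: "transpose_mat A = A"
      and p: "\<And>i j. i < 2*s \<Longrightarrow> j < 2*s \<Longrightarrow> i \<noteq> j \<Longrightarrow> (A $$ (i,j) \<noteq> 0 \<longleftrightarrow> KsK2 s i j)"
      using A unfolding S_graph_def by auto
    have "KsK2 s 0 1" using assms unfolding KsK2_def by simp
    hence "A $$ (0,1) \<noteq> 0" using p[of 0 1] assms by simp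
    thus ?thesis unfolding num_distinct_eigs_def using two_eigs[OF c t, of 0 1] assms by simp
  qed
  have "q_graph (2 * s) (KsK2 s) = 2"
    unfolding q_graph_def
  proof (rule Least_equality)
    show "\<exists>A \<in> S_graph (2 * s) (KsK2 s). num_distinct_eigs A = 2" using ex by blast
    fix k assume "\<exists>A \<in> S_graph (2 * s) (KsK2 s). num_distinct_eigs A = k"
    thus "2 \<le> k" using lb by blast
  qed
  with ex show ?thesis by simp
qed

end
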